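(* Let $m\in\mathbb{N}^+$ and $p\in(1,p_S)$. Then $$|u^{(m)}_p(x)|\leq \frac{M^{(m)}_{0,p}}{\Big[1+\frac{(M^{(m)}_{0,p})^{p-1}}{N(N-2)}|x|^2\Big]^{\frac{N-2}{2}}}\qquad\text{for all }x\in B^{(m)}_{0,p}.$$
   Context: Standing setting: $N\geq3$, $B$ unit ball of $\mathbb{R}^N$ centered at $0$, $p_S=\frac{N+2}{N-2}$. $u^{(m)}_p$ is the unique radial solution of $-\Delta u=|u|^{p-1}u$ in $B$, $u=0$ on $\partial B$, with exactly $m$ nodal regions and $u^{(m)}_p(0)>0$. $r^{(m)}_{1,p}$ is its first nodal radius if $m\geq2$ and $r^{(m)}_{1,p}=1$ if $m=1$; $B^{(m)}_{0,p}=\{|x|<r^{(m)}_{1,p}\}$; $M^{(m)}_{0,p}=u^{(m)}_p(0)=\max_{B^{(m)}_{0,p}}|u^{(m)}_p|$. *)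

theory Defs
  imports "HOL-Analysis.Analysis"
begin

definition C2_on :: "'a::euclidean_space set \<Rightarrow> ('a \<Rightarrow> real) \<Rightarrow> bool" where
  "C2_on S u \<longleftrightarrow> (\<exists>Du :: 'a \<Rightarrow> ('a \<Rightarrow>\<^sub>L real). \<exists>D2u :: 'a \<Rightarrow> ('a \<Rightarrow>\<^sub>L ('a \<Rightarrow>\<^sub>L real)).
      (\<forall>x\<in>S. (u has_derivative blinfun_apply (Du x)) (at x) \<and>
               (Du has_derivative blinfun_apply (D2u x)) (at x)) \<and>
      continuous_on S D2u)"

definition laplacian :: "('a::euclidean_space \<Rightarrow> real) \<Rightarrow> 'a \<Rightarrow> real" where
  "laplacian u x = (\<Sum>b\<in>Basis. deriv (\<lambda>t. deriv (\<lambda>s. u (x + s *\<^sub>R b)) t) 0)"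

definition lane_emden_dirichlet_sol :: "real \<Rightarrow> ('a::euclidean_space \<Rightarrow> real) \<Rightarrow> bool" where
  "lane_emden_dirichlet_sol p u \<longleftrightarrow>
     C2_on (ball 0 1) u \<and> continuous_on (cball 0 1) u \<and>
     (\<forall>x\<in>ball 0 1. - laplacian u x = \<bar>u x\<bar> powr (p - 1) * u x) \<and>
     (\<forall>x\<in>sphere 0 1. u x = 0)"

definition radial_on :: "'a::real_normed_vector set \<Rightarrow> ('a \<Rightarrow> real) \<Rightarrow> bool" where
  "radial_on S u \<longleftrightarrow> (\<forall>x\<in>S. \<forall>y\<in>S. norm x = norm y \<longrightarrow> u x = u y)"

definition nodal_regions :: "('a::euclidean_space \<Rightarrow> real) \<Rightarrow> 'a set set" where
  "nodal_regions u = components {x \<in> ball 0 1. u x \<noteq> 0}"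

text \<open>First nodal radius of a radial function (equals 1 if u has no zero in B).\<close>
definition first_nodal_radius :: "('a::euclidean_space \<Rightarrow> real) \<Rightarrow> real" where
  "first_nodal_radius u = Inf ({norm x | x. x \<in> ball 0 1 \<and> u x = 0} \<union> {1})"

end

theory Submission
  imports Defs
begin


lemma ode_steps_ab:
  fixes v v1 v2 :: "real \<Rightarrow> real" and n :: nat and p R :: real
  assumes n3: "n \<ge> 3"
    and dv: "\<And>t. 0 \<le> t \<Longrightarrow> t < R \<Longrightarrow> (v has_real_derivative v1 t) (at t)"
    and dv1: "\<And>t. 0 \<le> t \<Longrightarrow> t < R \<Longrightarrow> (v1 has_real_derivative v2 t) (at t)"
    and v10: "v1 0 = 0"
    and ode: "\<And>t. 0 < t \<Longrightarrow> t < R \<Longrightarrow> -(v2 t + (real n - 1) * v1 t / t) = v t powr p"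
    and pos: "\<And>t. 0 \<le> t \<Longrightarrow> t < R \<Longrightarrow> v t > 0"
    and p: "1 < p" "p < (real n + 2) / (real n - 2)"
  shows "\<And>t. 0 \<le> t \<Longrightarrow> t < R \<Longrightarrow> v1 t \<le> 0"
    and "\<And>t. 0 \<le> t \<Longrightarrow> t < R \<Longrightarrow>
        0 \<le> (real n - 2) / real n * t ^ n * (v t powr p * v t) + (real n - 2) * t^(n-2) * t * v t * v1 t + t^(n-2) * t * t * (v1 t)\<^sup>2"
proof -
  define N where "N = real n"
  have N3: "N \<ge> 3" using n3 by (simp add: N_def)
  define k where "k = n - 3"
  have nk: "n = Suc (Suc (Suc k))" using n3 unfolding k_def by arith
  have pw1: "x ^ (n - Suc 0) = x^(n - Suc (Suc 0)) * x" for x :: real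
    by (simp add: nk power_Suc2 del: power_Suc)
  have pwn: "x ^ n = x^(n - Suc (Suc 0)) * x * x" for x :: real
    by (simp add: nk power_Suc2 del: power_Suc)
  have z2: "(0::real)^(n-2) = 0" using n3 by simp
  have zs: "(0::real)^(n - Suc 0) = 0" "(0::real)^(n - Suc (Suc 0)) = 0" "(0::real)^n = 0"
    by (simp_all add: nk)
  have rn1: "real (n - Suc 0) = N - 1" using n3 by (simp add: N_def of_nat_diff)
  show v1neg: "v1 t \<le> 0" if t: "0 \<le> t" "t < R" for t
  proof (cases "t = 0")
    case True then show ?thesis using v10 by simp
  next
    case False
    then have tp: "t > 0" using t by simp
    define f where "f x = - (x^(n-1) * v1 x)" for x
    have "f 0 \<le> f t"
    proof (rule DERIV_nonneg_imp_nondecreasing[OF t(1)])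
      fix x assume x: "0 \<le> x" "x \<le> t"
      have d: "DERIV f x :> - ((N-1) * x^(n-1-1) * v1 x + x^(n-1) * v2 x)"
        unfolding f_def using dv1[of x] x t
        by (auto intro!: derivative_eq_intros simp: rn1)
      have "(N-1) * x^(n-1-1) * v1 x + x^(n-1) * v2 x \<le> 0"
      proof (cases "x = 0")
        case True then show ?thesis using z2 v10 n3 by (simp add: power_0_left)
      next
        case False
        then have xp: "x > 0" using x by simp
        have e: "v2 x = - (v x powr p) - (N-1) * v1 x / x" using ode[of x] xp x t
          by (simp add: N_def algebra_simps)
        have nn: "n - 1 - 1 = n - 2" by simp
        have "(N-1) * x^(n-1-1) * v1 x + x^(n-1) * v2 x = - (x^(n-1) * v x powr p)"
          using xp by (simp add: e nn pw1 field_simps)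
        also have "\<dots> \<le> 0" using xp by simp
        finally show ?thesis .
      qed
      then show "\<exists>y. DERIV f x :> y \<and> 0 \<le> y" using d by auto
    qed
    then have "t^(n-1) * v1 t \<le> 0" by (simp add: f_def v10 z2 pw1)
    moreover have "t^(n-1) > 0" using tp by simp
    ultimately show ?thesis by (simp add: mult_le_0_iff)
  qed
  show "0 \<le> (real n - 2) / real n * t ^ n * (v t powr p * v t) + (real n - 2) * t^(n-2) * t * v t * v1 t + t^(n-2) * t * t * (v1 t)\<^sup>2"
    if t: "0 \<le> t" "t < R" for t
  proof -
    define Psi where "Psi x = (N - 2) / N * x ^ n * (v x powr (p+1)) + (N - 2) * x^(n-1) * v x * v1 x + x^n * (v1 x)\<^sup>2" for x
    have "Psi 0 \<le> Psi t"
    proof (rule DERIV_nonneg_imp_nondecreasing[OF t(1)])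
      fix x assume x: "0 \<le> x" "x \<le> t"
      have vx: "v x > 0" using pos x t by simp
      have d: "DERIV Psi x :> (N - 2) / N * (N * x^(n - 1) * v x powr (p+1) + x^n * ((p+1) * v x powr p * v1 x))
          + (N - 2) * ((N-1) * x^(n-1-1) * v x * v1 x + x^(n-1) * v1 x * v1 x + x^(n-1) * v x * v2 x)
          + (N * x^(n-1) * (v1 x)\<^sup>2 + x^n * (2 * v1 x * v2 x))"
        unfolding Psi_def using dv[of x] dv1[of x] x t vx n3
        apply (intro derivative_eq_intros)
        apply (auto simp: rn1 N_def power2_eq_square)
        apply (simp add: field_simps)
        apply (simp add: algebra_simps)
        done
      have "0 \<le> (N - 2) / N * (N * x^(n - 1) * v x powr (p+1) + x^n * ((p+1) * v x powr p * v1 x))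
          + (N - 2) * ((N-1) * x^(n-1-1) * v x * v1 x + x^(n-1) * v1 x * v1 x + x^(n-1) * v x * v2 x)
          + (N * x^(n-1) * (v1 x)\<^sup>2 + x^n * (2 * v1 x * v2 x))"
      proof (cases "x = 0")
        case True then show ?thesis by (simp add: zs v10)
      next
        case False
        then have xp: "x > 0" using x by simp
        have e: "v2 x = - (v x powr p) - (N-1) * v1 x / x" using ode[of x] xp x t
          by (simp add: N_def algebra_simps)
        have P: "v x powr (p+1) = v x powr p * v x" "v x powr (1+p) = v x powr p * v x" using vx by (simp_all add: powr_add)
        have nn: "n - 1 - 1 = n - 2" by simp
        have "(N - 2) / N * (N * x^(n - 1) * v x powr (p+1) + x^n * ((p+1) * v x powr p * v1 x))
          + (N - 2) * ((N-1) * x^(n-1-1) * v x * v1 x + x^(n-1) * v1 x * v1 x + x^(n-1) * v x * v2 x)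
          + (N * x^(n-1) * (v1 x)\<^sup>2 + x^n * (2 * v1 x * v2 x))
          = (N + 2 - (N - 2) * p) / N * x^n * v x powr p * (- v1 x)"
          using xp N3 by (simp add: e P pw1 pwn nn field_simps power2_eq_square)
        also have "\<dots> \<ge> 0"
        proof -
          have "(N - 2) * p < N + 2" using p N3 by (simp add: N_def pos_less_divide_eq mult.commute)
          then have "(N + 2 - (N - 2) * p) / N \<ge> 0" using N3 by simp
          moreover have "- v1 x \<ge> 0" using v1neg[of x] x t by simp
          moreover have "x^n * v x powr p \<ge> 0" using xp by simp
          ultimately have "0 \<le> (N + 2 - (N - 2) * p) / N * (x^n * v x powr p) * (- v1 x)"
            by (metis mult_nonneg_nonneg)
          then show ?thesis by (simp add: mult.assoc)
        qed
        finally show ?thesis .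
      qed
      then show "\<exists>y. DERIV Psi x :> y \<and> 0 \<le> y" using d by blast
    qed
    moreover have "Psi 0 = 0" by (simp add: Psi_def zs)
    ultimately have "0 \<le> Psi t" by simp
    moreover have "v t powr (p+1) = v t powr p * v t" using pos[OF t] by (simp add: powr_add)
    ultimately show ?thesis by (simp add: Psi_def N_def pw1 pwn numeral_2_eq_2)
  qed
qed



lemma ode_bound:
  fixes v v1 v2 :: "real \<Rightarrow> real" and n :: nat and p R r :: real
  assumes n3: "n \<ge> 3"
    and dv: "\<And>t. 0 \<le> t \<Longrightarrow> t < R \<Longrightarrow> (v has_real_derivative v1 t) (at t)"
    and dv1: "\<And>t. 0 \<le> t \<Longrightarrow> t < R \<Longrightarrow> (v1 has_real_derivative v2 t) (at t)"
    and v10: "v1 0 = 0"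
    and v20: "-(real n * v2 0) = v 0 powr p"
    and ode: "\<And>t. 0 < t \<Longrightarrow> t < R \<Longrightarrow> -(v2 t + (real n - 1) * v1 t / t) = v t powr p"
    and pos: "\<And>t. 0 \<le> t \<Longrightarrow> t < R \<Longrightarrow> v t > 0"
    and p: "1 < p" "p < (real n + 2) / (real n - 2)"
    and r: "0 \<le> r" "r < R"
  shows "v r \<le> v 0 / (1 + v 0 powr (p - 1) / (real n * (real n - 2)) * r\<^sup>2) powr ((real n - 2) / 2)"
proof -
  note ab = ode_steps_ab[OF n3 dv dv1 v10 ode pos p]
  define N where "N = real n"
  have N3: "N \<ge> 3" using n3 by (simp add: N_def)
  have R0: "0 < R" using r by simp
  define M where "M = v 0"
  have M0: "M > 0" using pos[of 0] R0 by (simp add: M_def)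
  define g where "g = N / (N - 2)"
  define L where "L = - v2 0 / M powr g"
  define w where "w x = - v1 x / (x * v x powr g)" for x
  define k where "k = n - 3"
  have nk: "n = Suc (Suc (Suc k))" using n3 unfolding k_def by arith
  have pwn: "x ^ n = x^(n - Suc (Suc 0)) * x * x" for x :: real
    by (simp add: nk power_Suc2 del: power_Suc)
  have wmono: "w s \<le> w t" if st: "0 < s" "s \<le> t" "t < R" for s t
  proof (rule DERIV_nonneg_imp_nondecreasing[OF st(2)])
    fix x assume x: "s \<le> x" "x \<le> t"
    have xp: "x > 0" and xR: "x < R" using x st by auto
    have vx: "v x > 0" using pos[of x] xp xR by simp
    define V where "V = v x powr g"
    have V0: "V > 0" using vx by (simp add: V_def)
    have dV: "DERIV (\<lambda>y. v y powr g) x :> g * v x powr (g - 1) * v1 x"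
      using DERIV_fun_powr[OF dv[of x] vx, of g] xp xR by simp
    have dg: "DERIV (\<lambda>y. y * v y powr g) x :> 1 * V + x * (g * v x powr (g - 1) * v1 x)"
      using DERIV_mult[OF DERIV_ident dV] by (simp add: V_def algebra_simps)
    have df: "DERIV (\<lambda>y. - v1 y) x :> - v2 x" using dv1[of x] xp xR by (auto intro: derivative_intros)
    have dw: "DERIV w x :> ((- v2 x) * (x * V) - (1 * V + x * (g * v x powr (g - 1) * v1 x)) * (- v1 x)) / (x * V) ^ Suc (Suc 0)"
      unfolding w_def V_def using DERIV_quotient[OF df dg] xp vx unfolding V_def by simp
    have vg1: "v x powr (g - 1) = V / v x" using vx by (simp add: V_def powr_diff)
    have e: "v2 x = - (v x powr p) - (N-1) * v1 x / x" using ode[of x] xp xR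
      by (simp add: N_def algebra_simps)
    define a where "a = x ^ (n - Suc (Suc 0))"
    have a0: "a > 0" using xp by (simp add: a_def)
    define B where "B = x * (v x powr p) * v x + N * v x * v1 x + g * x * (v1 x)\<^sup>2"
    have Psi: "0 \<le> (N - 2) / N * x ^ n * (v x powr p * v x) + (N - 2) * x^(n-2) * x * v x * v1 x + x^(n-2) * x * x * (v1 x)\<^sup>2"
      unfolding N_def by (rule ab(2)) (use xp xR in auto)
    have xn: "x ^ n = a * x * x" unfolding a_def by (rule pwn)
    have f1: "(N-2)/N * a * x * (x * (v x powr p) * v x) = (N-2)/N * (a*x*x) * (v x powr p * v x)"
      by (simp add: algebra_simps)
    have f2: "(N-2)/N * a * x * (N * v x * v1 x) = (N-2) * a * x * v x * v1 x"
      using N3 by simp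
    have f3: "(N-2)/N * a * x * (g * x * (v1 x)\<^sup>2) = a*x*x*(v1 x)\<^sup>2"
      using N3 unfolding g_def by simp
    have "(N - 2) / N * x ^ n * (v x powr p * v x) + (N - 2) * x^(n-2) * x * v x * v1 x + x^(n-2) * x * x * (v1 x)\<^sup>2
          = ((N - 2) / N * a * x) * B"
      unfolding B_def distrib_left f1 f2 f3 by (simp add: xn a_def numeral_2_eq_2)
    with Psi have "0 \<le> ((N - 2) / N * a * x) * B" by simp
    moreover have "(N - 2) / N * a * x > 0" using N3 a0 xp by simp
    ultimately have B0: "B \<ge> 0" by (metis zero_le_mult_iff not_le)
    have num: "(- v2 x) * (x * V) - (1 * V + x * (g * v x powr (g - 1) * v1 x)) * (- v1 x) = (V / v x) * B"
      using vx xp N3 unfolding B_def by (simp add: vg1 e field_simps power2_eq_square N_def)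
    have "0 \<le> (V / v x) * B" using V0 vx B0 by simp
    then have n0: "0 \<le> (- v2 x) * (x * V) - (1 * V + x * (g * v x powr (g - 1) * v1 x)) * (- v1 x)"
      by (simp only: num)
    then have "0 \<le> ((- v2 x) * (x * V) - (1 * V + x * (g * v x powr (g - 1) * v1 x)) * (- v1 x)) / (x * V) ^ Suc (Suc 0)"
      by (rule divide_nonneg_nonneg) simp
    then show "\<exists>y. DERIV w x :> y \<and> 0 \<le> y" using dw by blast
  qed
  have lim1: "((\<lambda>h. v1 h / h) \<longlongrightarrow> v2 0) (at 0)"
    using dv1[of 0] R0 v10 by (simp add: DERIV_def)
  have cont: "isCont v 0" using dv[of 0] R0 by (simp add: DERIV_isCont)
  have lim2: "((\<lambda>h. v h powr g) \<longlongrightarrow> M powr g) (at 0)"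
    using cont M0 unfolding M_def isCont_def by (auto intro!: tendsto_powr)
  have lim3: "((\<lambda>h. - (v1 h / h) / v h powr g) \<longlongrightarrow> L) (at 0)"
    unfolding L_def using tendsto_divide[OF tendsto_minus[OF lim1] lim2] M0 by simp
  have lim4: "((\<lambda>h. - (v1 h / h) / v h powr g) \<longlongrightarrow> L) (at_right 0)"
    using lim3 by (simp add: filterlim_at_split)
  have wL: "L \<le> w t" if t: "0 < t" "t < R" for t
  proof (rule tendsto_le[OF _ tendsto_const lim4])
    show "at_right (0::real) \<noteq> bot" by simp
    show "\<forall>\<^sub>F x in at_right 0. - (v1 x / x) / v x powr g \<le> w t"
      unfolding eventually_at_right_field
    proof (intro exI[of _ t] conjI allI impI)
      fix y :: real assume y: "0 < y" "y < t"
      have "- (v1 y / y) / v y powr g = w y" by (simp add: w_def)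
      also have "\<dots> \<le> w t" using wmono[of y t] y t by simp
      finally show "- (v1 y / y) / v y powr g \<le> w t" .
    qed (use t in auto)
  qed
  define e where "e = - 2 / (N - 2)"
  define psi where "psi x = v x powr e" for x
  define h where "h x = psi x - L / (N - 2) * x\<^sup>2" for x
  have hmono: "h 0 \<le> h r"
  proof (rule DERIV_nonneg_imp_nondecreasing[OF r(1)])
    fix x assume x: "0 \<le> x" "x \<le> r"
    have xR: "x < R" using x r by simp
    have vx: "v x > 0" using pos[of x] x xR by simp
    have dpsi: "DERIV psi x :> e * v x powr (e - 1) * v1 x"
      unfolding psi_def using DERIV_fun_powr[OF dv[of x] vx, of e] x xR by simp
    have dh: "DERIV h x :> e * v x powr (e - 1) * v1 x - L / (N - 2) * (2 * x)"
      unfolding h_def using N3 by (auto intro!: derivative_eq_intros dpsi)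
    have "0 \<le> e * v x powr (e - 1) * v1 x - L / (N - 2) * (2 * x)"
    proof (cases "x = 0")
      case True then show ?thesis by (simp add: v10)
    next
      case False
      then have xp: "x > 0" using x by simp
      have em: "e - 1 = - g" using N3 unfolding e_def g_def by (simp add: field_simps)
      have "e * v x powr (e - 1) * v1 x = 2 / (N - 2) * x * w x"
        using xp vx N3 unfolding w_def e_def[symmetric] by (simp add: em powr_minus field_simps e_def g_def)
      moreover have "L \<le> w x" using wL[of x] xp xR by simp
      moreover have "L * (x * 2) / (N - 2) \<le> x * (w x * 2) / (N - 2)"
      proof (rule divide_right_mono)
        show "L * (x * 2) \<le> x * (w x * 2)" using \<open>L \<le> w x\<close> xp by (simp add: mult.commute mult_left_mono)
      qed (use N3 in simp)
      ultimately show ?thesis by (simp add: algebra_simps)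
    qed
    then show "\<exists>y. DERIV h x :> y \<and> 0 \<le> y" using dh by blast
  qed
  define c where "c = M powr (p - 1) / (N * (N - 2))"
  define Q where "Q = M powr e * (1 + c * r\<^sup>2)"
  have v2e: "v2 0 = - (M powr p) / N" using v20 N3 unfolding M_def N_def
    by (simp add: field_simps)
  have Lv: "L = M powr p / N / M powr g" unfolding L_def v2e by simp
  have expeq: "e + (p - 1) = p - g" using N3 unfolding e_def g_def by (simp add: field_simps)
  have X: "M powr e * M powr (p - 1) = M powr p / M powr g"
    by (simp add: powr_add[symmetric] powr_diff[symmetric] expeq)
  have "M powr e * (c * r\<^sup>2) = (M powr e * M powr (p - 1)) * r\<^sup>2 / (N * (N - 2))"
    by (simp add: c_def)
  also have "\<dots> = M powr p / M powr g * r\<^sup>2 / (N * (N - 2))" by (simp only: X)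
  also have "\<dots> = L / (N - 2) * r\<^sup>2" by (simp add: Lv)
  finally have Y: "M powr e * (c * r\<^sup>2) = L / (N - 2) * r\<^sup>2" .
  have Qeq: "Q = psi 0 - L / (N - 2) * 0\<^sup>2 + L / (N - 2) * r\<^sup>2"
    unfolding Q_def psi_def M_def[symmetric] distrib_left Y by simp
  have Qle: "Q \<le> psi r" using hmono unfolding h_def Qeq by simp
  have c0: "c \<ge> 0" using N3 unfolding c_def by simp
  have Q0: "Q > 0" unfolding Q_def using M0 c0 by (simp add: add_pos_nonneg)
  define b where "b = - ((N - 2) / 2)"
  have b0: "b \<le> 0" using N3 unfolding b_def by simp
  have vr: "v r > 0" using pos r by simp
  have eb: "e * b = 1" using N3 unfolding e_def b_def by (simp add: field_simps)
  have "v r = psi r powr b"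
    unfolding psi_def using vr by (simp add: powr_powr eb)
  also have "\<dots> \<le> Q powr b" by (rule powr_mono2'[OF b0 Q0 Qle])
  also have "Q powr b = (M powr e) powr b * (1 + c * r\<^sup>2) powr b"
    unfolding Q_def using M0 c0 by (simp add: powr_mult add_nonneg_nonneg)
  also have "(M powr e) powr b = M" using M0 by (simp add: powr_powr eb)
  also have "(1 + c * r\<^sup>2) powr b = 1 / (1 + c * r\<^sup>2) powr ((N - 2) / 2)"
    unfolding b_def by (simp add: powr_minus_divide)
  finally show ?thesis unfolding M_def c_def N_def by simp
qed


lemma line_derivs:
  fixes u :: "'a::euclidean_space \<Rightarrow> real"
  assumes D: "\<forall>x\<in>ball 0 1. (u has_derivative blinfun_apply (Du x)) (at x) \<and>
               (Du has_derivative blinfun_apply (D2u x)) (at x)"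
    and t: "\<bar>t\<bar> < 1" and e: "norm e = 1"
  shows "((\<lambda>t. u (t *\<^sub>R e)) has_real_derivative (Du (t *\<^sub>R e) e)) (at t)"
    and "((\<lambda>t. Du (t *\<^sub>R e) e) has_real_derivative (D2u (t *\<^sub>R e) e e)) (at t)"
proof -
  have xin: "t *\<^sub>R e \<in> ball 0 1" using t e by simp
  have l: "((\<lambda>t. t *\<^sub>R e) has_derivative (\<lambda>h. h *\<^sub>R e)) (at t)"
    by (auto intro!: derivative_eq_intros)
  have "((\<lambda>t. u (t *\<^sub>R e)) has_derivative (\<lambda>h. Du (t *\<^sub>R e) (h *\<^sub>R e))) (at t)"
    using has_derivative_compose[OF l, of u] D xin by (simp add: o_def)
  then show "((\<lambda>t. u (t *\<^sub>R e)) has_real_derivative (Du (t *\<^sub>R e) e)) (at t)"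
    unfolding has_field_derivative_def
    by (rule has_derivative_eq_rhs) (auto simp: blinfun.scaleR_right fun_eq_iff)
  have "((\<lambda>t. Du (t *\<^sub>R e)) has_derivative (\<lambda>h. D2u (t *\<^sub>R e) (h *\<^sub>R e))) (at t)"
    using has_derivative_compose[OF l, of Du] D xin by (simp add: o_def)
  then have "((\<lambda>t. Du (t *\<^sub>R e) e) has_derivative (\<lambda>h. D2u (t *\<^sub>R e) (h *\<^sub>R e) e)) (at t)"
    by (auto intro!: derivative_eq_intros)
  then show "((\<lambda>t. Du (t *\<^sub>R e) e) has_real_derivative (D2u (t *\<^sub>R e) e e)) (at t)"
    unfolding has_field_derivative_def
    by (rule has_derivative_eq_rhs) (auto simp: blinfun.scaleR_right blinfun.scaleR_left fun_eq_iff)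
qed

lemma ev_lt:
  fixes f :: "real \<Rightarrow> real"
  assumes "continuous_on UNIV f" "f x < c"
  shows "eventually (\<lambda>t. f t < c) (nhds x)"
  using eventually_nhds_in_open[OF open_Collect_less[OF assms(1) continuous_on_const], of x c] assms(2)
  by simp

lemma shift_deriv: "((\<lambda>s. r + s) has_real_derivative 1) (at (t::real))"
  by (auto intro!: derivative_eq_intros)

lemma term_e:
  fixes u :: "'a::euclidean_space \<Rightarrow> real" and v v1 v2 :: "real \<Rightarrow> real"
  assumes dv: "\<And>t. \<bar>t\<bar> < 1 \<Longrightarrow> (v has_real_derivative v1 t) (at t)"
    and dv1: "\<And>t. \<bar>t\<bar> < 1 \<Longrightarrow> (v1 has_real_derivative v2 t) (at t)"
    and vdef: "\<And>t. v t = u (t *\<^sub>R e)"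
    and r: "0 < r" "r < 1"
  shows "deriv (\<lambda>t. deriv (\<lambda>s. u (r *\<^sub>R e + s *\<^sub>R e)) t) 0 = v2 r"
proof -
  have ev: "eventually (\<lambda>t. deriv (\<lambda>s. u (r *\<^sub>R e + s *\<^sub>R e)) t = v1 (r + t)) (nhds 0)"
  proof -
    have "eventually (\<lambda>t. \<bar>r + t\<bar> < 1) (nhds 0)"
      by (rule ev_lt) (use r in \<open>auto intro!: continuous_intros\<close>)
    then show ?thesis
    proof eventually_elim
      case (elim t)
      have "(\<lambda>s. u (r *\<^sub>R e + s *\<^sub>R e)) = (\<lambda>s. v (r + s))" by (simp add: vdef scaleR_add_left)
      moreover have "DERIV (\<lambda>s. v (r + s)) t :> v1 (r + t)"
        using DERIV_chain2[where g="\<lambda>s. r+s" and x=t, OF dv[of "r+t"] shift_deriv[of r t]] elim by simp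
      ultimately show ?case by (simp add: DERIV_imp_deriv)
    qed
  qed
  have "DERIV (\<lambda>t. v1 (r + t)) 0 :> v2 r"
    using DERIV_chain2[where g="\<lambda>s. r+s" and x=0, OF dv1[of "r+0"] shift_deriv[of r 0]] r by simp
  then have "DERIV (\<lambda>t. deriv (\<lambda>s. u (r *\<^sub>R e + s *\<^sub>R e)) t) 0 :> v2 r"
    using DERIV_cong_ev[OF refl ev refl] by simp
  then show ?thesis by (rule DERIV_imp_deriv)
qed

lemma norm_two_basis:
  fixes e b :: "'a::euclidean_space"
  assumes "e \<in> Basis" "b \<in> Basis" "b \<noteq> e"
  shows "norm (r *\<^sub>R e + s *\<^sub>R b) = sqrt (r\<^sup>2 + s\<^sup>2)"
  using assms by (simp add: norm_eq_sqrt_inner inner_add_left inner_add_right inner_Basis power2_eq_square)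

lemma term_b:
  fixes u :: "'a::euclidean_space \<Rightarrow> real" and v v1 v2 :: "real \<Rightarrow> real"
  assumes dv: "\<And>t. \<bar>t\<bar> < 1 \<Longrightarrow> (v has_real_derivative v1 t) (at t)"
    and dv1: "\<And>t. \<bar>t\<bar> < 1 \<Longrightarrow> (v1 has_real_derivative v2 t) (at t)"
    and vdef: "\<And>t. v t = u (t *\<^sub>R e)"
    and rad: "radial_on (cball 0 1) u"
    and eb: "e \<in> Basis" "b \<in> Basis" "b \<noteq> e"
    and r: "0 < r" "r < 1"
  shows "deriv (\<lambda>t. deriv (\<lambda>s. u (r *\<^sub>R e + s *\<^sub>R b)) t) 0 = v1 r / r"
proof -
  define n where "n s = sqrt (r\<^sup>2 + s\<^sup>2)" for s
  have ne: "norm e = 1" using eb by simp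
  have uv: "u (r *\<^sub>R e + s *\<^sub>R b) = v (n s)" if s: "r\<^sup>2 + s\<^sup>2 \<le> 1" for s
  proof -
    have n1: "n s \<le> 1" using s by (simp add: n_def)
    have nrm: "norm (r *\<^sub>R e + s *\<^sub>R b) = n s" using norm_two_basis[OF eb] by (simp add: n_def)
    have nrm2: "norm (n s *\<^sub>R e) = n s" using ne by (simp add: n_def)
    show ?thesis unfolding vdef using rad n1 nrm nrm2 unfolding radial_on_def by simp
  qed
  have dn: "DERIV n t :> t / n t" for t
  proof -
    have "r\<^sup>2 + t\<^sup>2 > 0" using r by (simp add: add_pos_nonneg)
    then show ?thesis unfolding n_def
      by (auto intro!: derivative_eq_intros simp: power2_eq_square divide_simps)
  qed
  have ev: "eventually (\<lambda>t. deriv (\<lambda>s. u (r *\<^sub>R e + s *\<^sub>R b)) t = v1 (n t) * (t / n t)) (nhds 0)"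
  proof -
    have "eventually (\<lambda>t. r\<^sup>2 + t\<^sup>2 < 1) (nhds 0)"
      by (rule ev_lt) (use r in \<open>auto intro!: continuous_intros simp: power_less_one_iff\<close>)
    then show ?thesis
    proof eventually_elim
      case (elim t)
      have "eventually (\<lambda>s. r\<^sup>2 + s\<^sup>2 < 1) (nhds t)"
        by (rule ev_lt) (use elim in \<open>auto intro!: continuous_intros\<close>)
      then have ev2: "eventually (\<lambda>s. u (r *\<^sub>R e + s *\<^sub>R b) = v (n s)) (nhds t)"
        by eventually_elim (simp add: uv)
      have nt: "\<bar>n t\<bar> < 1" using elim by (simp add: n_def)
      have "DERIV (\<lambda>s. v (n s)) t :> v1 (n t) * (t / n t)"
        using DERIV_chain2[where g=n and x=t, OF dv[OF nt] dn] by simp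
      then have "DERIV (\<lambda>s. u (r *\<^sub>R e + s *\<^sub>R b)) t :> v1 (n t) * (t / n t)"
        using DERIV_cong_ev[OF refl ev2 refl] by simp
      then show ?case by (rule DERIV_imp_deriv)
    qed
  qed
  have n0: "n 0 = r" using r by (simp add: n_def)
  have d1: "DERIV (\<lambda>t. v1 (n t)) 0 :> v2 (n 0) * (0 / n 0)"
    using DERIV_chain2[where g=n and x=0, OF dv1 dn] r n0 by simp
  have d2: "DERIV (\<lambda>t. t / n t) 0 :> (1 * n 0 - (0 / n 0) * 0) / (n 0 ^ Suc (Suc 0))"
    using DERIV_quotient[OF DERIV_ident dn, of 0] r n0 by simp
  have "DERIV (\<lambda>t. v1 (n t) * (t / n t)) 0 :> v1 r / r"
    using DERIV_mult[OF d1 d2] r n0 by (simp add: power2_eq_square)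
  then have "DERIV (\<lambda>t. deriv (\<lambda>s. u (r *\<^sub>R e + s *\<^sub>R b)) t) 0 :> v1 r / r"
    using DERIV_cong_ev[OF refl ev refl] by simp
  then show ?thesis by (rule DERIV_imp_deriv)
qed

lemma term_0:
  fixes u :: "'a::euclidean_space \<Rightarrow> real" and v v1 v2 :: "real \<Rightarrow> real"
  assumes dv: "\<And>t. \<bar>t\<bar> < 1 \<Longrightarrow> (v has_real_derivative v1 t) (at t)"
    and dv1: "\<And>t. \<bar>t\<bar> < 1 \<Longrightarrow> (v1 has_real_derivative v2 t) (at t)"
    and vdef: "\<And>t. v t = u (t *\<^sub>R e)"
    and rad: "radial_on (cball 0 1) u"
    and eb: "e \<in> Basis" "b \<in> Basis"
  shows "deriv (\<lambda>t. deriv (\<lambda>s. u (0 + s *\<^sub>R b)) t) 0 = v2 0"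
proof -
  have uv: "u (s *\<^sub>R b) = v s" if s: "\<bar>s\<bar> < 1" for s
    unfolding vdef using rad s eb unfolding radial_on_def by simp
  have ev: "eventually (\<lambda>t. deriv (\<lambda>s. u (0 + s *\<^sub>R b)) t = v1 t) (nhds 0)"
  proof -
    have "eventually (\<lambda>t. \<bar>t\<bar> < 1) (nhds (0::real))"
      by (rule ev_lt) (auto intro!: continuous_intros)
    then show ?thesis
    proof eventually_elim
      case (elim t)
      have "eventually (\<lambda>s. \<bar>s\<bar> < 1) (nhds t)"
        by (rule ev_lt) (use elim in \<open>auto intro!: continuous_intros\<close>)
      then have ev2: "eventually (\<lambda>s. u (0 + s *\<^sub>R b) = v s) (nhds t)"
        by eventually_elim (simp add: uv)
      have "DERIV (\<lambda>s. u (0 + s *\<^sub>R b)) t :> v1 t"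
        using DERIV_cong_ev[OF refl ev2 refl] dv[OF elim] by simp
      then show ?case by (rule DERIV_imp_deriv)
    qed
  qed
  have "DERIV (\<lambda>t. deriv (\<lambda>s. u (0 + s *\<^sub>R b)) t) 0 :> v2 0"
    using DERIV_cong_ev[OF refl ev refl] dv1[of 0] by simp
  then show ?thesis by (rule DERIV_imp_deriv)
qed

lemma v1_zero:
  fixes u :: "'a::euclidean_space \<Rightarrow> real" and v v1 :: "real \<Rightarrow> real"
  assumes dv: "\<And>t. \<bar>t\<bar> < 1 \<Longrightarrow> (v has_real_derivative v1 t) (at t)"
    and vdef: "\<And>t. v t = u (t *\<^sub>R e)"
    and rad: "radial_on (cball 0 1) u"
    and e: "e \<in> Basis"
  shows "v1 0 = 0"
proof -
  have "eventually (\<lambda>t. \<bar>t\<bar> < 1) (nhds (0::real))"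
    by (rule ev_lt) (auto intro!: continuous_intros)
  then have ev: "eventually (\<lambda>t. v (- t) = v t) (nhds 0)"
  proof eventually_elim
    case (elim t)
    then show ?case unfolding vdef using rad e unfolding radial_on_def by simp
  qed
  have "DERIV (\<lambda>t. v (- t)) 0 :> v1 0 * (- 1)"
    using DERIV_chain2[where g=uminus and x=0, OF _ DERIV_minus[OF DERIV_ident]] dv[of 0] by simp
  then have "DERIV v 0 :> - v1 0"
    using DERIV_cong_ev[OF refl ev refl] by simp
  then have "v1 0 = - v1 0" using DERIV_unique[OF dv[of 0, simplified]] by blast
  then show ?thesis by simp
qed

theorem proposition3p5:
  fixes u :: "'a::euclidean_space \<Rightarrow> real" and p :: real and m :: nat
  assumes dim: "DIM('a) \<ge> 3"
    and m: "m \<ge> 1"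
    and p: "1 < p" "p < (real DIM('a) + 2) / (real DIM('a) - 2)"
    and sol: "lane_emden_dirichlet_sol p u"
    and rad: "radial_on (cball 0 1) u"
    and nodal: "finite (nodal_regions u)" "card (nodal_regions u) = m"
    and pos: "u 0 > 0"
  shows "\<forall>x. norm x < first_nodal_radius u \<longrightarrow>
           \<bar>u x\<bar> \<le> u 0 / (1 + (u 0) powr (p - 1) / (real DIM('a) * (real DIM('a) - 2)) * (norm x)\<^sup>2)
                         powr ((real DIM('a) - 2) / 2)"
proof -
  from sol have C2: "C2_on (ball 0 1) u"
    and pde: "\<And>x. x \<in> ball 0 1 \<Longrightarrow> - laplacian u x = \<bar>u x\<bar> powr (p - 1) * u x"
    unfolding lane_emden_dirichlet_sol_def by auto
  from C2 obtain Du :: "'a \<Rightarrow> ('a \<Rightarrow>\<^sub>L real)" and D2u :: "'a \<Rightarrow> ('a \<Rightarrow>\<^sub>L ('a \<Rightarrow>\<^sub>L real))"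
    where D: "\<forall>x\<in>ball 0 1. (u has_derivative blinfun_apply (Du x)) (at x) \<and>
               (Du has_derivative blinfun_apply (D2u x)) (at x)"
    unfolding C2_on_def by blast
  obtain e :: 'a where e: "e \<in> Basis" using nonempty_Basis by blast
  have ne: "norm e = 1" using e by simp
  define v where "v t = u (t *\<^sub>R e)" for t
  define v1 where "v1 t = Du (t *\<^sub>R e) e" for t
  define v2 where "v2 t = D2u (t *\<^sub>R e) e e" for t
  have vdef: "\<And>t. v t = u (t *\<^sub>R e)" by (simp add: v_def)
  have dv: "\<And>t. \<bar>t\<bar> < 1 \<Longrightarrow> (v has_real_derivative v1 t) (at t)"
    unfolding v_def v1_def using line_derivs(1)[OF D _ ne] by blast
  have dv1: "\<And>t. \<bar>t\<bar> < 1 \<Longrightarrow> (v1 has_real_derivative v2 t) (at t)"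
    unfolding v2_def v1_def using line_derivs(2)[OF D _ ne] by blast
  define n where "n = DIM('a)"
  have n3: "n \<ge> 3" using dim by (simp add: n_def)
  have cardB: "card (Basis - {e}) = n - 1" using e by (simp add: n_def)
  have lap_r: "laplacian u (r *\<^sub>R e) = v2 r + (real n - 1) * v1 r / r" if r: "0 < r" "r < 1" for r
  proof -
    have "laplacian u (r *\<^sub>R e) = (\<Sum>b\<in>Basis. deriv (\<lambda>t. deriv (\<lambda>s. u (r *\<^sub>R e + s *\<^sub>R b)) t) 0)"
      by (simp add: laplacian_def)
    also have "\<dots> = deriv (\<lambda>t. deriv (\<lambda>s. u (r *\<^sub>R e + s *\<^sub>R e)) t) 0
        + (\<Sum>b\<in>Basis - {e}. deriv (\<lambda>t. deriv (\<lambda>s. u (r *\<^sub>R e + s *\<^sub>R b)) t) 0)"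
      using sum.remove[OF finite_Basis e] by simp
    also have "(\<Sum>b\<in>Basis - {e}. deriv (\<lambda>t. deriv (\<lambda>s. u (r *\<^sub>R e + s *\<^sub>R b)) t) 0)
        = (\<Sum>b\<in>Basis - {e}. v1 r / r)"
      by (rule sum.cong[OF refl]) (use term_b[OF dv dv1 vdef rad e _ _ r] in auto)
    also have "\<dots> = (real n - 1) * v1 r / r" using n3 by (simp add: cardB of_nat_diff)
    also have "deriv (\<lambda>t. deriv (\<lambda>s. u (r *\<^sub>R e + s *\<^sub>R e)) t) 0 = v2 r"
      by (rule term_e[OF dv dv1 vdef r])
    finally show ?thesis .
  qed
  have lap0: "laplacian u 0 = real n * v2 0"
  proof -
    have "laplacian u 0 = (\<Sum>b\<in>Basis. deriv (\<lambda>t. deriv (\<lambda>s. u (0 + s *\<^sub>R b)) t) 0)"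
      by (simp only: laplacian_def)
    also have "\<dots> = (\<Sum>b\<in>(Basis::'a set). v2 0)"
      by (rule sum.cong[OF refl]) (use term_0[OF dv dv1 vdef rad e] in auto)
    finally show ?thesis by (simp add: n_def)
  qed
  have v10: "v1 0 = 0" by (rule v1_zero[OF dv vdef rad e])
  define R where "R = first_nodal_radius u"
  define S where "S = {norm x |x. x \<in> ball 0 1 \<and> u x = 0} \<union> {1::real}"
  have bdd: "bdd_below S" unfolding S_def by (rule bdd_belowI[of _ 0]) auto
  have RS: "R = Inf S" unfolding R_def S_def first_nodal_radius_def by simp
  have R1: "R \<le> 1" unfolding RS using bdd by (rule cInf_lower[rotated]) (simp add: S_def)
  have nz: "v t \<noteq> 0" if t: "0 \<le> t" "t < R" for t
  proof
    assume v0: "v t = 0"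
    have "t *\<^sub>R e \<in> ball 0 1" using t R1 ne by simp
    then have "t \<in> S" unfolding S_def using v0 t ne by (auto simp: v_def intro!: exI[of _ "t *\<^sub>R e"])
    then have "R \<le> t" unfolding RS using bdd by (rule cInf_lower)
    then show False using t by simp
  qed
  have vpos: "v t > 0" if t: "0 \<le> t" "t < R" for t
  proof (rule ccontr)
    assume "\<not> v t > 0"
    then have "v t \<le> 0" by simp
    moreover have "0 \<le> v 0" using pos by (simp add: v_def)
    moreover have "\<forall>x. 0 \<le> x \<and> x \<le> t \<longrightarrow> isCont v x"
    proof (intro allI impI)
      fix x assume "0 \<le> x \<and> x \<le> t"
      then have "\<bar>x\<bar> < 1" using t R1 by auto
      then show "isCont v x" using DERIV_isCont[OF dv] by blast
    qed
    ultimately obtain s where s: "0 \<le> s" "s \<le> t" "v s = 0"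
      using IVT2[of v t 0 0] t by auto
    then show False using nz[of s] t by simp
  qed
  have ode: "-(v2 t + (real n - 1) * v1 t / t) = v t powr p" if t: "0 < t" "t < R" for t
  proof -
    have vt: "v t > 0" using vpos t by simp
    have "t *\<^sub>R e \<in> ball 0 1" using t R1 ne by simp
    from pde[OF this] have "- laplacian u (t *\<^sub>R e) = \<bar>v t\<bar> powr (p - 1) * v t" by (simp add: v_def)
    also have "\<dots> = v t powr p" using vt by (simp add: powr_diff)
    finally show ?thesis using lap_r[of t] t R1 by simp
  qed
  have v20: "-(real n * v2 0) = v 0 powr p"
  proof -
    have "(0::'a) \<in> ball 0 1" by simp
    from pde[OF this] have "- laplacian u 0 = \<bar>v 0\<bar> powr (p - 1) * v 0" by (simp add: v_def)
    also have "\<dots> = v 0 powr p" using pos by (simp add: powr_diff v_def)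
    finally show ?thesis by (simp add: lap0)
  qed
  show ?thesis
  proof (intro allI impI)
    fix x :: 'a
    assume x: "norm x < first_nodal_radius u"
    have xR: "norm x < R" using x by (simp add: R_def)
    have ux: "u x = v (norm x)" unfolding v_def using rad xR R1 ne unfolding radial_on_def by simp
    have "v (norm x) \<le> v 0 / (1 + v 0 powr (p - 1) / (real n * (real n - 2)) * (norm x)\<^sup>2) powr ((real n - 2) / 2)"
    proof (rule ode_bound[OF n3 _ _ v10 v20 ode vpos])
      show "\<And>t. 0 \<le> t \<Longrightarrow> t < R \<Longrightarrow> (v has_real_derivative v1 t) (at t)"
        using dv R1 by simp
      show "\<And>t. 0 \<le> t \<Longrightarrow> t < R \<Longrightarrow> (v1 has_real_derivative v2 t) (at t)"
        using dv1 R1 by simp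
    qed (use p xR in \<open>auto simp: n_def\<close>)
    moreover have "v (norm x) > 0" using vpos xR by simp
    ultimately show "\<bar>u x\<bar> \<le> u 0 / (1 + (u 0) powr (p - 1) / (real DIM('a) * (real DIM('a) - 2)) * (norm x)\<^sup>2)
                         powr ((real DIM('a) - 2) / 2)"
      using ux by (simp add: v_def n_def)
  qed
qed

end
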